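(* Let $(X,d,\mu)$ be an almost-manifold metric measure space of dimension $m$ satisfying (LPI), with unbounded regular part $\mathcal R$. Fix $o\in\mathcal R$ and an integer $i\ge1$, and let $\mathcal S_i=\mathcal S\cap\overline{B_i(o)}$. If $\dim_{\mathcal H}(\mathcal S)<\frac{m-2}{2}$, then there exists a finite Radon measure $\nu$ supported on $\mathcal S_i$ such that $\mathcal W^\nu(x)=+\infty$ for every $x\in\mathcal S_i$, where $$\mathcal W^\nu(x):=\int_0^1\big(\nu(B_r(x))\,r^{2-m}\big)^{\frac{2}{m-2}}\,dr.$$
   Context: A metric measure space $(X,d,\mu)$: $(X,d)$ is a complete metric space and $\mu$ is a Borel regular measure with $\mu(B_r(x))<\infty$. It is almost-manifold (of dimension $m$) if there is an integer $m\ge3$ such that (i) for every bounded $U\subset X$ there are $\varepsilon,C>0$ with $C^{-1}r^m\le\mu(B_r(x))\le Cr^m$ for $x\in U$, $r\in(0,\varepsilon)$; (ii) $X=\mathcal R\sqcup\mathcal S$ where $\mathcal R$ is a connected smooth $m$-manifold with a Riemannian metric $g$ such that $d_L=d_g$ and $\mu=\mu_g$ on $\mathcal R$ ($d_L$ the length metric associated to $d$), and $\mathcal S$ is closed with $\mathcal H^{m-2}(\mathcal S)=0$. For open $\Omega\subset X$, $W^{1,2}_0(\Omega)$ is the completion of $C^\infty_0(\mathcal R\cap\Omega)$ in the norm $(\int_{\mathcal R}|\phi|^2+|\nabla_g\phi|^2\,d\mu)^{1/2}$. (LPI): for every bounded $U\subset X$ there are $\varepsilon>0$, $\lambda\ge1$,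 $C_P>0$ with $\fint_B|\phi-\phi_B|\,d\mu\le C_Pr(\fint_{\mathcal R\cap\lambda B}|\nabla_g\phi|^2\,d\mu)^{1/2}$ for all $\phi\in W^{1,2}_0(X)$, $B=B_r(x)$, $x\in U$, $r\in(0,\varepsilon)$. Hausdorff dimension is with respect to $d$. *)

theory Defs
  imports "HOL-Analysis.Analysis"
begin

coinductive C_inf :: "(real^'n) set \<Rightarrow> (real^'n \<Rightarrow> real) \<Rightarrow> bool" where
  "\<lbrakk>\<forall>x\<in>S. f differentiable (at x);
    \<forall>i. C_inf S (\<lambda>x. frechet_derivative f (at x) (axis i 1))\<rbrakk> \<Longrightarrow> C_inf S f"

definition smooth_map :: "(real^'n) set \<Rightarrow> (real^'n \<Rightarrow> real^'k) \<Rightarrow> bool" where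
  "smooth_map S F \<longleftrightarrow> (\<forall>j. C_inf S (\<lambda>x. F x $ j))"

type_synonym ('a,'n) chart = "'a set \<times> ('a \<Rightarrow> real^'n)"

definition is_chart :: "'a::topological_space set \<Rightarrow> ('a,'n::finite) chart \<Rightarrow> bool" where
  "is_chart R c \<longleftrightarrow> fst c \<subseteq> R \<and> open (fst c) \<and> open (snd c ` fst c) \<and>
     inj_on (snd c) (fst c) \<and> continuous_on (fst c) (snd c) \<and>
     continuous_on (snd c ` fst c) (inv_into (fst c) (snd c))"

definition chart_inv :: "('a,'n) chart \<Rightarrow> real^'n \<Rightarrow> 'a" where
  "chart_inv c = inv_into (fst c) (snd c)"

definition transition :: "('a,'n) chart \<Rightarrow> ('a,'n) chart \<Rightarrow> real^'n \<Rightarrow> real^'n" where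
  "transition c c' = snd c' \<circ> chart_inv c"

definition smooth_atlas :: "'a::topological_space set \<Rightarrow> ('a,'n::finite) chart set \<Rightarrow> bool" where
  "smooth_atlas R A \<longleftrightarrow> (\<forall>c\<in>A. is_chart R c) \<and> \<Union>(fst ` A) = R \<and>
     (\<forall>c\<in>A. \<forall>c'\<in>A. smooth_map (snd c ` (fst c \<inter> fst c')) (transition c c'))"

text \<open>A Riemannian metric is given by its coefficient matrices in each chart,
  smooth, symmetric, positive definite and compatible under chart changes.\<close>
definition riemannian_metric ::
  "'a::topological_space set \<Rightarrow> ('a,'n::finite) chart set \<Rightarrow> (('a,'n) chart \<Rightarrow> real^'n \<Rightarrow> real^'n^'n) \<Rightarrow> bool" where
  "riemannian_metric R A g \<longleftrightarrow> smooth_atlas R A \<and>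
     (\<forall>c\<in>A. (\<forall>i j. C_inf (snd c ` fst c) (\<lambda>y. g c y $ i $ j)) \<and>
        (\<forall>y\<in>snd c ` fst c. transpose (g c y) = g c y \<and> (\<forall>v. v \<noteq> 0 \<longrightarrow> v \<bullet> (g c y *v v) > 0))) \<and>
     (\<forall>c\<in>A. \<forall>c'\<in>A. \<forall>y\<in>snd c ` (fst c \<inter> fst c').
        g c y = transpose (matrix (frechet_derivative (transition c c') (at y)))
                ** g c' (transition c c' y) ** matrix (frechet_derivative (transition c c') (at y)))"

definition chart_at :: "('a,'n) chart set \<Rightarrow> 'a \<Rightarrow> ('a,'n) chart" where
  "chart_at A p = (SOME c. c \<in> A \<and> p \<in> fst c)"

definition smooth_curve :: "'a::topological_space set \<Rightarrow> ('a,'n::finite) chart set \<Rightarrow> (real \<Rightarrow> 'a) \<Rightarrow> bool" where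
  "smooth_curve R A \<gamma> \<longleftrightarrow> path \<gamma> \<and> \<gamma> ` {0..1} \<subseteq> R \<and>
     (\<forall>c\<in>A. \<exists>D. (\<forall>t\<in>{t\<in>{0..1}. \<gamma> t \<in> fst c}.
          ((snd c \<circ> \<gamma>) has_vector_derivative D t) (at t within {0..1})) \<and>
        continuous_on {t\<in>{0..1}. \<gamma> t \<in> fst c} D)"

definition speed :: "('a,'n::finite) chart set \<Rightarrow> (('a,'n) chart \<Rightarrow> real^'n \<Rightarrow> real^'n^'n) \<Rightarrow> (real \<Rightarrow> 'a) \<Rightarrow> real \<Rightarrow> real" where
  "speed A g \<gamma> t = (let c = chart_at A (\<gamma> t);
       v = vector_derivative (snd c \<circ> \<gamma>) (at t within {0..1})
     in sqrt (v \<bullet> (g c (snd c (\<gamma> t)) *v v)))"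

definition riem_dist :: "'a::topological_space set \<Rightarrow> ('a,'n::finite) chart set \<Rightarrow> (('a,'n) chart \<Rightarrow> real^'n \<Rightarrow> real^'n^'n) \<Rightarrow> 'a \<Rightarrow> 'a \<Rightarrow> ennreal" where
  "riem_dist R A g x y = (INF \<gamma>\<in>{\<gamma>. smooth_curve R A \<gamma> \<and> pathstart \<gamma> = x \<and> pathfinish \<gamma> = y}.
      \<integral>\<^sup>+ t\<in>{0..1}. ennreal (speed A g \<gamma> t) \<partial>lborel)"

definition curve_length :: "(real \<Rightarrow> 'a::metric_space) \<Rightarrow> ennreal" where
  "curve_length \<gamma> = (SUP p\<in>{(n, t::nat \<Rightarrow> real). (\<forall>k\<le>n. 0 \<le> t k \<and> t k \<le> 1) \<and> (\<forall>k<n. t k \<le> t (Suc k))}.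
      ennreal (\<Sum>k<fst p. dist (\<gamma> (snd p k)) (\<gamma> (snd p (Suc k)))))"

definition length_dist :: "'a::metric_space \<Rightarrow> 'a \<Rightarrow> ennreal" where
  "length_dist x y = (INF \<gamma>\<in>{\<gamma>. path \<gamma> \<and> pathstart \<gamma> = x \<and> pathfinish \<gamma> = y}. curve_length \<gamma>)"

section \<open>Hausdorff measure and dimension (up to normalisation constant)\<close>

definition hausdorff_pre :: "real \<Rightarrow> real \<Rightarrow> 'a::metric_space set \<Rightarrow> ennreal" where
  "hausdorff_pre s \<delta> E = (INF C\<in>{C::nat \<Rightarrow> 'a set. E \<subseteq> \<Union>(range C) \<and> (\<forall>k. bounded (C k) \<and> diameter (C k) \<le> \<delta>)}.
      (\<Sum>k. ennreal (diameter (C k) powr s)))"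

definition hausdorff_measure :: "real \<Rightarrow> 'a::metric_space set \<Rightarrow> ennreal" where
  "hausdorff_measure s E = (SUP \<delta>\<in>{0<..}. hausdorff_pre s \<delta> E)"

definition hausdorff_dim :: "'a::metric_space set \<Rightarrow> ereal" where
  "hausdorff_dim E = Inf (ereal ` {s. 0 \<le> s \<and> hausdorff_measure s E = 0})"

definition test_function :: "'a::topological_space set \<Rightarrow> ('a,'n::finite) chart set \<Rightarrow> 'a set \<Rightarrow> ('a \<Rightarrow> real) \<Rightarrow> bool" where
  "test_function R A \<Omega> \<phi> \<longleftrightarrow> (\<exists>K. compact K \<and> K \<subseteq> R \<inter> \<Omega> \<and> (\<forall>p. p \<notin> K \<longrightarrow> \<phi> p = 0)) \<and>
     (\<forall>c\<in>A. C_inf (snd c ` fst c) (\<phi> \<circ> chart_inv c))"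

definition grad_norm_sq :: "('a,'n::finite) chart set \<Rightarrow> (('a,'n) chart \<Rightarrow> real^'n \<Rightarrow> real^'n^'n) \<Rightarrow> ('a \<Rightarrow> real) \<Rightarrow> 'a \<Rightarrow> real" where
  "grad_norm_sq A g \<phi> p = (let c = chart_at A p; y = snd c p;
       D = (\<chi> i. frechet_derivative (\<phi> \<circ> chart_inv c) (at y) (axis i 1))
     in D \<bullet> (matrix_inv (g c y) *v D))"

definition vol_compat :: "'a::topological_space measure \<Rightarrow> ('a,'n::finite) chart set \<Rightarrow> (('a,'n) chart \<Rightarrow> real^'n \<Rightarrow> real^'n^'n) \<Rightarrow> bool" where
  "vol_compat \<mu> A g \<longleftrightarrow> (\<forall>c\<in>A. \<forall>B\<in>sets borel. B \<subseteq> fst c \<longrightarrow>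
      emeasure \<mu> B = (\<integral>\<^sup>+ y\<in>snd c ` B. ennreal (sqrt (det (g c y))) \<partial>lborel))"

definition almost_manifold :: "nat \<Rightarrow> 'a::complete_space measure \<Rightarrow> 'a set \<Rightarrow> ('a,'n::finite) chart set
    \<Rightarrow> (('a,'n) chart \<Rightarrow> real^'n \<Rightarrow> real^'n^'n) \<Rightarrow> bool" where
  "almost_manifold m \<mu> S A g \<longleftrightarrow>
     m \<ge> 3 \<and> CARD('n) = m \<and>
     sets \<mu> = sets borel \<and> (\<forall>x r. emeasure \<mu> (ball x r) < \<infinity>) \<and>
     (\<forall>U. bounded U \<longrightarrow> (\<exists>\<epsilon>>0. \<exists>C>0. \<forall>x\<in>U. \<forall>r. 0 < r \<and> r < \<epsilon> \<longrightarrow>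
         r ^ m / C \<le> measure \<mu> (ball x r) \<and> measure \<mu> (ball x r) \<le> C * r ^ m)) \<and>
     closed S \<and> hausdorff_measure (real m - 2) S = 0 \<and>
     connected (UNIV - S) \<and> riemannian_metric (UNIV - S) A g \<and>
     (\<forall>x\<in>UNIV - S. \<forall>y\<in>UNIV - S. length_dist x y = riem_dist (UNIV - S) A g x y) \<and>
     vol_compat \<mu> A g"

definition LPI :: "'a::metric_space measure \<Rightarrow> 'a set \<Rightarrow> ('a,'n::finite) chart set
    \<Rightarrow> (('a,'n) chart \<Rightarrow> real^'n \<Rightarrow> real^'n^'n) \<Rightarrow> bool" where
  "LPI \<mu> S A g \<longleftrightarrow> (\<forall>U. bounded U \<longrightarrow> (\<exists>\<epsilon>>0. \<exists>lam\<ge>1. \<exists>CP>0.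
     \<forall>\<phi>. test_function (UNIV - S) A UNIV \<phi> \<longrightarrow> (\<forall>x\<in>U. \<forall>r. 0 < r \<and> r < \<epsilon> \<longrightarrow>
       (let B = ball x r; avg = (\<integral>y. indicator B y * \<phi> y \<partial>\<mu>) / measure \<mu> B;
            LB = (UNIV - S) \<inter> ball x (lam * r)
        in (\<integral>y. indicator B y * \<bar>\<phi> y - avg\<bar> \<partial>\<mu>) / measure \<mu> B
           \<le> CP * r * sqrt ((\<integral>y. indicator LB y * grad_norm_sq A g \<phi> y \<partial>\<mu>) / measure \<mu> LB)))))"

definition finite_radon :: "'a::topological_space measure \<Rightarrow> bool" where
  "finite_radon \<nu> \<longleftrightarrow> sets \<nu> = sets borel \<and> emeasure \<nu> UNIV < \<infinity> \<and>
     (\<forall>B\<in>sets borel. emeasure \<nu> B = (SUP K\<in>{K. compact K \<and> K \<subseteq> B}. emeasure \<nu> K))"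

definition wolff :: "nat \<Rightarrow> 'a::metric_space measure \<Rightarrow> 'a \<Rightarrow> ennreal" where
  "wolff m \<nu> x = (\<integral>\<^sup>+ r\<in>{0<..1}.
      ennreal ((measure \<nu> (ball x r) * r powr (2 - real m)) powr (2 / (real m - 2))) \<partial>lborel)"

end

theory Submission
  imports Defs
begin


lemma pt_bound:
  fixes m :: nat and t \<rho> r Mr :: real
  assumes m3: "m \<ge> 3" and t0: "0 \<le> t" and tm: "t < (real m - 2)/2"
    and r0: "0 < \<rho>" and r1: "\<rho> \<le> 1" and rr: "\<rho> < r" "r \<le> 2*\<rho>"
    and M: "\<rho> powr t \<le> Mr"
  shows "1/(4*\<rho>) \<le> (Mr * r powr (2 - real m)) powr (2 / (real m - 2))"
proof -
  define p where "p = 2 / (real m - 2)"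
  have p0: "0 < p" using m3 by (simp add: p_def)
  have tp: "t * p \<le> 1" using tm m3 by (simp add: p_def field_simps)
  have qp: "(2 - real m) * p = -2" using m3 by (simp add: p_def field_simps)
  define X where "X = \<rho> powr t * (2*\<rho>) powr (2 - real m)"
  have X0: "0 < X" using r0 by (simp add: X_def)
  have "(2*\<rho>) powr (2 - real m) \<le> r powr (2 - real m)"
    by (rule powr_mono2') (use m3 r0 rr in auto)
  moreover have "0 \<le> Mr" using M order_trans[OF powr_ge_zero] by blast
  ultimately have "X \<le> Mr * r powr (2 - real m)"
    unfolding X_def by (intro mult_mono M) auto
  hence A: "X powr p \<le> (Mr * r powr (2 - real m)) powr p"
    using X0 p0 by (intro powr_mono2) auto
  have B: "X powr p = \<rho> powr (t*p) * (2 powr (-2) * \<rho> powr (-2))"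
    unfolding X_def using r0
    by (simp add: powr_mult powr_powr qp)
  have C: "\<rho> powr (t*p) * (2 powr (-2) * \<rho> powr (-2)) = (1/4) * \<rho> powr (t*p - 2)"
    using r0 by (simp add: powr_diff powr_minus divide_simps)
  have D: "\<rho> powr (-1) \<le> \<rho> powr (t*p - 2)"
    by (rule powr_mono') (use tp r0 r1 in auto)
  have E: "\<rho> powr (-1) = 1/\<rho>" using r0 by (simp add: powr_minus divide_simps)
  have "1/(4*\<rho>) = (1/4) * \<rho> powr (-1)" using E by simp
  also have "\<dots> \<le> (1/4) * \<rho> powr (t*p - 2)" using D by simp
  also have "\<dots> = X powr p" using B C by simp
  also have "\<dots> \<le> (Mr * r powr (2 - real m)) powr p" by (rule A)
  finally show ?thesis unfolding p_def .
qed

lemma wolff_aux: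
  fixes M :: "real \<Rightarrow> real" and m :: nat and t :: real
  assumes m3: "m \<ge> 3" and t0: "0 \<le> t" and tm: "t < (real m - 2)/2" and mono: "mono M"
    and rho: "\<And>a. 0 < a \<Longrightarrow> \<exists>\<rho>>0. 2*\<rho> \<le> a \<and> (\<forall>r>\<rho>. \<rho> powr t \<le> M r)"
  shows "(\<integral>\<^sup>+ r\<in>{0<..1}. ennreal ((M r * r powr (2 - real m)) powr (2 / (real m - 2))) \<partial>lborel) = \<infinity>"
proof -
  define f where "f r = ennreal ((M r * r powr (2 - real m)) powr (2 / (real m - 2)))" for r
  have Mm: "M \<in> borel_measurable borel" using borel_measurable_mono[OF mono] .
  have fm: "f \<in> borel_measurable lborel" unfolding f_def using Mm by measurable
  define F where "F a = (\<integral>\<^sup>+ r. f r * indicator {0<..a} r \<partial>lborel)" for a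
  have claim: "\<forall>a. 0 < a \<longrightarrow> a \<le> 1 \<longrightarrow> ennreal (real N / 4) \<le> F a" for N
  proof (induction N)
    case 0
    then show ?case by simp
  next
    case (Suc N)
    show ?case
    proof (intro allI impI)
      fix a :: real assume a0: "0 < a" and a1: "a \<le> 1"
      obtain \<rho> where r0: "0 < \<rho>" and ra: "2*\<rho> \<le> a" and rM: "\<forall>r>\<rho>. \<rho> powr t \<le> M r"
        using rho[OF a0] by blast
      have r1: "\<rho> \<le> 1" using ra a1 r0 by simp
      have IH: "ennreal (real N / 4) \<le> F \<rho>" using Suc r0 r1 by auto
      have "(\<integral>\<^sup>+ r. ennreal (1/(4*\<rho>)) * indicator {\<rho><..2*\<rho>} r \<partial>lborel)
          \<le> (\<integral>\<^sup>+ r. f r * indicator {\<rho><..2*\<rho>} r \<partial>lborel)"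
      proof (rule nn_integral_mono)
        fix r
        show "ennreal (1/(4*\<rho>)) * indicator {\<rho><..2*\<rho>} r \<le> f r * indicator {\<rho><..2*\<rho>} r"
        proof (cases "r \<in> {\<rho><..2*\<rho>}")
          case True
          then have "1/(4*\<rho>) \<le> (M r * r powr (2 - real m)) powr (2 / (real m - 2))"
            using pt_bound[OF m3 t0 tm r0 r1, of r "M r"] rM by auto
          then show ?thesis using True unfolding f_def by (simp add: ennreal_leI)
        qed simp
      qed
      moreover have "(\<integral>\<^sup>+ r. ennreal (1/(4*\<rho>)) * indicator {\<rho><..2*\<rho>} r \<partial>lborel) = ennreal (1/4)"
      proof -
        have "(\<integral>\<^sup>+ r. ennreal (1/(4*\<rho>)) * indicator {\<rho><..2*\<rho>} r \<partial>lborel)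
           = ennreal (1/(4*\<rho>)) * emeasure lborel {\<rho><..2*\<rho>}"
          by (rule nn_integral_cmult_indicator) simp
        also have "\<dots> = ennreal (1/(4*\<rho>)) * ennreal \<rho>"
          using r0 by (simp add: emeasure_lborel_Ioc)
        also have "\<dots> = ennreal (1/(4*\<rho>) * \<rho>)" by (rule ennreal_mult''[symmetric]) (use r0 in simp)
        also have "1/(4*\<rho>) * \<rho> = 1/4" using r0 by simp
        finally show ?thesis .
      qed
      ultimately have G: "ennreal (1/4) \<le> (\<integral>\<^sup>+ r. f r * indicator {\<rho><..2*\<rho>} r \<partial>lborel)" by simp
      have "ennreal (real (Suc N) / 4) = ennreal (real N / 4) + ennreal (1/4)"
      proof -
        have "real (Suc N) / 4 = real N / 4 + 1/4" by (simp add: field_simps)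
        hence "ennreal (real (Suc N) / 4) = ennreal (real N / 4 + 1/4)" by (rule arg_cong)
        also have "\<dots> = ennreal (real N / 4) + ennreal (1/4)" by (rule ennreal_plus) auto
        finally show ?thesis .
      qed
      also have "\<dots> \<le> F \<rho> + (\<integral>\<^sup>+ r. f r * indicator {\<rho><..2*\<rho>} r \<partial>lborel)"
        using IH G by (rule add_mono)
      also have "\<dots> = (\<integral>\<^sup>+ r. f r * indicator {0<..\<rho>} r + f r * indicator {\<rho><..2*\<rho>} r \<partial>lborel)"
        unfolding F_def using fm by (intro nn_integral_add[symmetric]) auto
      also have "\<dots> \<le> F a"
        unfolding F_def
      proof (rule nn_integral_mono)
        fix r
        show "f r * indicator {0<..\<rho>} r + f r * indicator {\<rho><..2*\<rho>} r \<le> f r * indicator {0<..a} r"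
          using r0 ra by (auto simp: indicator_def)
      qed
      finally show "ennreal (real (Suc N) / 4) \<le> F a" .
    qed
  qed
  have "F 1 = \<infinity>"
  proof (rule ccontr)
    assume "F 1 \<noteq> \<infinity>"
    then obtain c where c: "F 1 = ennreal c" "0 \<le> c" by (cases "F 1") auto
    obtain N :: nat where N: "4*c < real N" using reals_Archimedean2 by blast
    have "ennreal (real N / 4) \<le> F 1" using claim[of N] by simp
    hence "ennreal (real N / 4) \<le> ennreal c" using c by simp
    hence "real N / 4 \<le> c" using c by (simp add: ennreal_le_iff)
    thus False using N by simp
  qed
  thus ?thesis unfolding F_def f_def by simp
qed



definition dmeas :: "(nat \<Rightarrow> real) \<Rightarrow> (nat \<Rightarrow> 'a::metric_space) \<Rightarrow> 'a measure" where
  "dmeas W Y = distr (density (count_space UNIV) (\<lambda>n. ennreal (W n))) borel Y"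

lemma dmeas_sets: "sets (dmeas W Y) = sets borel"
  by (simp add: dmeas_def)

lemma dmeas_space: "space (dmeas W Y) = UNIV"
  by (simp add: dmeas_def)

lemma dmeas_emeasure:
  assumes "B \<in> sets borel"
  shows "emeasure (dmeas W Y) B = (\<Sum>n. ennreal (W n) * indicator B (Y n))"
proof -
  have Ym: "Y \<in> measurable (density (count_space UNIV) (\<lambda>n. ennreal (W n))) borel"
    by (simp add: measurable_count_space_eq1)
  have "emeasure (dmeas W Y) B = emeasure (density (count_space UNIV) (\<lambda>n. ennreal (W n))) (Y -` B)"
    unfolding dmeas_def using emeasure_distr[OF Ym assms] by simp
  also have "\<dots> = (\<integral>\<^sup>+ n. ennreal (W n) * indicator (Y -` B) n \<partial>count_space UNIV)"
    by (rule emeasure_density) auto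
  also have "\<dots> = (\<Sum>n. ennreal (W n) * indicator B (Y n))"
    by (simp add: nn_integral_count_space_nat indicator_def)
  finally show ?thesis .
qed

lemma ennreal_term_le_suminf: "(f n :: ennreal) \<le> (\<Sum>n. f n)"
  using sum_le_suminf[of f "{n}"] by (simp add: summableI)

lemma dmeas_lower:
  assumes "B \<in> sets borel" "Y n \<in> B"
  shows "ennreal (W n) \<le> emeasure (dmeas W Y) B"
proof -
  have "ennreal (W n) = ennreal (W n) * indicator B (Y n)" using assms by simp
  also have "\<dots> \<le> (\<Sum>n. ennreal (W n) * indicator B (Y n))" by (rule ennreal_term_le_suminf)
  finally show ?thesis using dmeas_emeasure[OF assms(1)] by simp
qed

lemma dmeas_total:
  assumes "\<And>n. 0 \<le> W n" "summable W"
  shows "emeasure (dmeas W Y) UNIV = ennreal (suminf W)"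
  using dmeas_emeasure[of UNIV W Y] suminf_ennreal2[OF assms] by simp

lemma dmeas_regular:
  assumes "B \<in> sets borel"
  shows "emeasure (dmeas W Y) B = (SUP K\<in>{K. compact K \<and> K \<subseteq> B}. emeasure (dmeas W Y) K)"
proof (rule antisym)
  show "(SUP K\<in>{K. compact K \<and> K \<subseteq> B}. emeasure (dmeas W Y) K) \<le> emeasure (dmeas W Y) B"
  proof (rule SUP_least)
    fix K assume "K \<in> {K. compact K \<and> K \<subseteq> B}"
    hence "K \<in> sets (dmeas W Y)" "K \<subseteq> B"
      by (auto simp: dmeas_sets intro: borel_closed compact_imp_closed)
    thus "emeasure (dmeas W Y) K \<le> emeasure (dmeas W Y) B"
      using assms by (intro emeasure_mono) (auto simp: dmeas_sets)
  qed
next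
  let ?f = "\<lambda>n. ennreal (W n) * indicator B (Y n)"
  have "emeasure (dmeas W Y) B = (SUP N. sum ?f {..<N})"
    using dmeas_emeasure[OF assms] by (simp add: suminf_eq_SUP)
  also have "\<dots> \<le> (SUP K\<in>{K. compact K \<and> K \<subseteq> B}. emeasure (dmeas W Y) K)"
  proof (rule SUP_least)
    fix N
    define K where "K = Y ` {n. n < N \<and> Y n \<in> B}"
    have Kc: "compact K" unfolding K_def by (intro finite_imp_compact) auto
    have KB: "K \<subseteq> B" unfolding K_def by auto
    have Ks: "K \<in> sets borel" using Kc by (intro borel_closed compact_imp_closed)
    have "sum ?f {..<N} \<le> sum (\<lambda>n. ennreal (W n) * indicator K (Y n)) {..<N}"
      by (intro sum_mono) (auto simp: K_def indicator_def)
    also have "\<dots> \<le> (\<Sum>n. ennreal (W n) * indicator K (Y n))"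
      by (rule sum_le_suminf) (auto simp: summableI)
    also have "\<dots> = emeasure (dmeas W Y) K" using dmeas_emeasure[OF Ks] by simp
    also have "\<dots> \<le> (SUP K\<in>{K. compact K \<and> K \<subseteq> B}. emeasure (dmeas W Y) K)"
      using Kc KB by (intro SUP_upper) auto
    finally show "sum ?f {..<N} \<le> (SUP K\<in>{K. compact K \<and> K \<subseteq> B}. emeasure (dmeas W Y) K)" .
  qed
  finally show "emeasure (dmeas W Y) B \<le> (SUP K\<in>{K. compact K \<and> K \<subseteq> B}. emeasure (dmeas W Y) K)" .
qed



lemma cover_lemma:
  fixes S T :: "'a::metric_space set"
  assumes H: "hausdorff_measure s S = 0" and TS: "T \<subseteq> S" and s0: "0 \<le> s" and st: "s \<le> t"
    and t0: "0 < t" and y0: "y0 \<in> T" and d0: "0 < \<delta>" and d1: "\<delta> \<le> 1" and e0: "0 < \<epsilon>"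
  shows "\<exists>Y R. (\<forall>j. Y j \<in> T) \<and> (\<forall>j. 0 < R j \<and> R j \<le> \<delta>) \<and> summable (\<lambda>j. R j powr t)
           \<and> (\<Sum>j. R j powr t) \<le> \<epsilon> \<and> (\<forall>x\<in>T. \<exists>j. dist x (Y j) \<le> R j)"
proof -
  have "hausdorff_pre s \<delta> S \<le> hausdorff_measure s S"
    unfolding hausdorff_measure_def by (rule SUP_upper) (use d0 in auto)
  hence "hausdorff_pre s \<delta> S = 0" using H by simp
  hence "hausdorff_pre s \<delta> S < ennreal (\<epsilon>/2)" using e0 by simp
  then obtain C where C1: "S \<subseteq> \<Union>(range C)" and C2: "\<forall>k. bounded (C k) \<and> diameter (C k) \<le> \<delta>"
    and Cs: "(\<Sum>k. ennreal (diameter (C k) powr s)) < ennreal (\<epsilon>/2)"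
    unfolding hausdorff_pre_def INF_less_iff by blast
  define d where "d k = diameter (C k)" for k
  have dge: "0 \<le> d k" for k unfolding d_def using C2 diameter_ge_0 by blast
  have dle: "d k \<le> \<delta>" for k unfolding d_def using C2 by blast
  have sd: "summable (\<lambda>k. d k powr s)"
    by (rule summable_suminf_not_top) (use Cs in \<open>auto simp: d_def\<close>)
  have Cs': "(\<Sum>k. ennreal (d k powr s)) < ennreal (\<epsilon>/2)" using Cs by (simp add: d_def)
  have "(\<Sum>k. ennreal (d k powr s)) = ennreal (\<Sum>k. d k powr s)"
    by (rule suminf_ennreal2[OF _ sd]) simp
  hence "ennreal (\<Sum>k. d k powr s) < ennreal (\<epsilon>/2)" using Cs' by simp
  moreover have "0 \<le> (\<Sum>k. d k powr s)" by (rule suminf_nonneg[OF sd]) simp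
  ultimately have sumd: "(\<Sum>k. d k powr s) \<le> \<epsilon>/2" using ennreal_less_iff by (meson less_imp_le)
  define g where "g j = \<epsilon>/2 * (1/2)^(Suc j)" for j :: nat
  have g0: "0 < g j" for j using e0 by (simp add: g_def)
  have sg: "summable g" unfolding g_def by (intro summable_mult summable_geometric_iff[THEN iffD2] summable_ignore_initial_segment[where k=1, simplified]) auto
  have sumg: "(\<Sum>j. g j) = \<epsilon>/2"
  proof -
    have "(\<Sum>j. g j) = \<epsilon>/4 * (\<Sum>j. (1/2::real)^j)"
      unfolding g_def by (subst suminf_mult[symmetric]) (auto simp: summable_geometric_iff)
    also have "\<dots> = \<epsilon>/2" by (simp add: suminf_geometric)
    finally show ?thesis .
  qed
  define e where "e j = min \<delta> (g j powr (1/t))" for j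
  have e0': "0 < e j" for j using d0 g0[of j] by (simp add: e_def)
  have eg: "e j powr t \<le> g j" for j
  proof -
    have "e j powr t \<le> (g j powr (1/t)) powr t"
      using e0'[of j] t0 by (intro powr_mono2) (auto simp: e_def)
    also have "\<dots> = g j" using g0[of j] t0 by (simp add: powr_powr)
    finally show ?thesis .
  qed
  define R where "R j = max (d j) (e j)" for j
  have R0: "0 < R j" for j using e0'[of j] by (simp add: R_def)
  have Rle: "R j \<le> \<delta>" for j using dle[of j] by (simp add: R_def e_def)
  have Rb: "R j powr t \<le> d j powr s + g j" for j
  proof (cases "d j \<le> e j")
    case True
    hence "R j = e j" by (simp add: R_def)
    hence "R j powr t = e j powr t" by simp
    moreover have "0 \<le> d j powr s" by simp
    ultimately show ?thesis using eg[of j] by linarith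
  next
    case False
    hence "R j = d j" by (simp add: R_def)
    moreover have "d j powr t \<le> d j powr s"
      by (rule powr_mono') (use st dge[of j] dle[of j] d1 in auto)
    ultimately show ?thesis using g0[of j] by simp
  qed
  have sR: "summable (\<lambda>j. R j powr t)"
    by (rule summable_comparison_test[where g="\<lambda>j. d j powr s + g j"])
       (use Rb in \<open>auto intro: summable_add sd sg\<close>)
  have "(\<Sum>j. R j powr t) \<le> (\<Sum>j. d j powr s + g j)"
    by (rule suminf_le) (use Rb sR sd sg in \<open>auto intro: summable_add\<close>)
  also have "\<dots> = (\<Sum>j. d j powr s) + (\<Sum>j. g j)" by (rule suminf_add[symmetric]) (use sd sg in auto)
  also have "\<dots> \<le> \<epsilon>" using sumd sumg by simp
  finally have sumR: "(\<Sum>j. R j powr t) \<le> \<epsilon>" .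
  define Y where "Y j = (if C j \<inter> T \<noteq> {} then (SOME y. y \<in> C j \<inter> T) else y0)" for j
  have YT: "Y j \<in> T" for j
    unfolding Y_def using y0 by (auto intro: someI2_ex)
  have cov: "\<exists>j. dist x (Y j) \<le> R j" if x: "x \<in> T" for x
  proof -
    obtain j where j: "x \<in> C j" using x TS C1 by blast
    hence ne: "C j \<inter> T \<noteq> {}" using x by blast
    hence "Y j \<in> C j" unfolding Y_def by (auto intro: someI2_ex)
    hence "dist x (Y j) \<le> d j" unfolding d_def using C2 j diameter_bounded_bound by blast
    thus ?thesis by (intro exI[of _ j]) (simp add: R_def)
  qed
  show ?thesis using YT R0 Rle sR sumR cov by blast
qed


theorem lemma2p19:
  fixes \<mu> :: "'a::complete_space measure" and S :: "'a set"
    and A :: "('a,'n::finite) chart set" and g :: "('a,'n) chart \<Rightarrow> real^'n \<Rightarrow> real^'n^'n"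
    and m :: nat and o\<^sub>0 :: 'a and i :: nat
  assumes "almost_manifold m \<mu> S A g"
    and "LPI \<mu> S A g"
    and "\<not> bounded (UNIV - S)"
    and "o\<^sub>0 \<in> UNIV - S"
    and "i \<ge> 1"
    and "hausdorff_dim S < ereal ((real m - 2) / 2)"
  shows "\<exists>\<nu>. finite_radon \<nu> \<and>
           emeasure \<nu> (UNIV - (S \<inter> closure (ball o\<^sub>0 (real i)))) = 0 \<and>
           (\<forall>x\<in>S \<inter> closure (ball o\<^sub>0 (real i)). wolff m \<nu> x = \<infinity>)"
proof -
  define T where "T = S \<inter> closure (ball o\<^sub>0 (real i))"
  have m3: "m \<ge> 3" and clS: "closed S" using assms(1) unfolding almost_manifold_def by auto
  have clT: "closed T" unfolding T_def using clS by auto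
  have cT: "UNIV - T \<in> sets borel" using clT by (simp add: borel_open open_Diff)
  show ?thesis
  proof (cases "T = {}")
    case True
    define \<nu> where "\<nu> = dmeas (\<lambda>n. 0) (\<lambda>n. o\<^sub>0)"
    have "finite_radon \<nu>"
      unfolding finite_radon_def \<nu>_def using dmeas_total[of "\<lambda>n. 0" "\<lambda>n. o\<^sub>0"]
      by (auto simp: dmeas_sets dmeas_regular)
    moreover have "emeasure \<nu> (UNIV - T) = 0"
      unfolding \<nu>_def using dmeas_emeasure[OF cT] by simp
    ultimately show ?thesis using True unfolding T_def by blast
  next
    case False
    then obtain y0 where y0: "y0 \<in> T" by blast
    obtain s where s0: "0 \<le> s" and Hs: "hausdorff_measure s S = 0" and sm: "s < (real m - 2)/2"
      using assms(6) unfolding hausdorff_dim_def Inf_less_iff by auto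
    define t where "t = (s + (real m - 2)/2)/2"
    have st: "s \<le> t" using sm unfolding t_def by (simp add: field_simps)
    have t0: "0 < t" using s0 sm unfolding t_def by (simp add: field_simps)
    have tm: "t < (real m - 2)/2" using sm unfolding t_def by (simp add: field_simps)
    have TS: "T \<subseteq> S" unfolding T_def by blast
    have "\<forall>k::nat. \<exists>Y R. (\<forall>j. Y j \<in> T) \<and> (\<forall>j. 0 < R j \<and> R j \<le> (1/2)^k) \<and> summable (\<lambda>j. R j powr t)
           \<and> (\<Sum>j. R j powr t) \<le> (1/2)^k \<and> (\<forall>x\<in>T. \<exists>j. dist x (Y j) \<le> R j)"
    proof
      fix k :: nat
      show "\<exists>Y R. (\<forall>j. Y j \<in> T) \<and> (\<forall>j. 0 < R j \<and> R j \<le> (1/2)^k) \<and> summable (\<lambda>j. R j powr t)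
           \<and> (\<Sum>j. R j powr t) \<le> (1/2)^k \<and> (\<forall>x\<in>T. \<exists>j. dist x (Y j) \<le> R j)"
        by (rule cover_lemma[OF Hs TS s0 st t0 y0]) (auto simp: power_le_one)
    qed
    then obtain Y where "\<forall>k. \<exists>R. (\<forall>j. Y k j \<in> T) \<and> (\<forall>j. 0 < R j \<and> R j \<le> (1/2)^k) \<and> summable (\<lambda>j. R j powr t)
           \<and> (\<Sum>j. R j powr t) \<le> (1/2)^k \<and> (\<forall>x\<in>T. \<exists>j. dist x (Y k j) \<le> R j)"
      by metis
    then obtain R where YR: "\<And>k. (\<forall>j. Y k j \<in> T) \<and> (\<forall>j. 0 < R k j \<and> R k j \<le> (1/2)^k) \<and> summable (\<lambda>j. R k j powr t)
           \<and> (\<Sum>j. R k j powr t) \<le> (1/2)^k \<and> (\<forall>x\<in>T. \<exists>j. dist x (Y k j) \<le> R k j)"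
      by metis
    define W where "W n = R (fst (prod_decode n)) (snd (prod_decode n)) powr t" for n
    define Yn where "Yn n = Y (fst (prod_decode n)) (snd (prod_decode n))" for n
    define \<nu> where "\<nu> = dmeas W Yn"
    have W0: "0 \<le> W n" for n by (simp add: W_def)
    have psum: "sum W {..<N} \<le> 2" for N
    proof -
      have "sum W {..<N} = sum (\<lambda>p. R (fst p) (snd p) powr t) (prod_decode ` {..<N})"
        unfolding W_def by (subst sum.reindex) (auto intro: inj_on_subset[OF inj_prod_decode])
      also have "\<dots> \<le> sum (\<lambda>p. R (fst p) (snd p) powr t) ({..<N} \<times> {..<N})"
      proof (rule sum_mono2)
        show "prod_decode ` {..<N} \<subseteq> {..<N} \<times> {..<N}"
        proof
          fix p assume "p \<in> prod_decode ` {..<N}"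
          then obtain n where n: "n < N" "p = prod_decode n" by auto
          obtain a b where p: "p = (a, b)" by (cases p)
          have "prod_encode (a,b) = n" using n p by (metis prod_decode_inverse)
          hence "a < N" "b < N" using n le_prod_encode_1[of a b] le_prod_encode_2[of b a] by auto
          thus "p \<in> {..<N} \<times> {..<N}" using p by simp
        qed
      qed auto
      also have "\<dots> = (\<Sum>k<N. \<Sum>j<N. R k j powr t)"
        by (simp add: sum.cartesian_product split_beta)
      also have "\<dots> \<le> (\<Sum>k<N. (1/2::real)^k)"
      proof (rule sum_mono)
        fix k assume "k \<in> {..<N}"
        have "(\<Sum>j<N. R k j powr t) \<le> (\<Sum>j. R k j powr t)"
          using YR[of k] by (intro sum_le_suminf) auto
        thus "(\<Sum>j<N. R k j powr t) \<le> (1/2)^k" using YR[of k] by linarith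
      qed
      also have "\<dots> \<le> (\<Sum>k. (1/2::real)^k)"
        by (intro sum_le_suminf) (auto simp: summable_geometric_iff)
      also have "\<dots> = 2" by (simp add: suminf_geometric)
      finally show ?thesis .
    qed
    have sW: "summable W" by (rule summableI_nonneg_bounded[OF W0 psum])
    have sW2: "suminf W \<le> 2" by (rule suminf_le_const[OF sW psum])
    have tot: "emeasure \<nu> UNIV = ennreal (suminf W)" unfolding \<nu>_def by (rule dmeas_total[OF W0 sW])
    have fr: "finite_radon \<nu>"
      unfolding finite_radon_def \<nu>_def using tot unfolding \<nu>_def
      by (auto simp: dmeas_sets dmeas_regular)
    have fm: "finite_measure \<nu>"
      by (rule finite_measureI) (use tot in \<open>simp add: \<nu>_def dmeas_space\<close>)
    have YnT: "Yn n \<in> T" for n unfolding Yn_def using YR by blast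
    have supp: "emeasure \<nu> (UNIV - T) = 0"
      unfolding \<nu>_def using dmeas_emeasure[OF cT, of W Yn] YnT by simp
    have wolffinf: "wolff m \<nu> x = \<infinity>" if x: "x \<in> T" for x
    proof -
      define M where "M r = measure \<nu> (ball x r)" for r
      have mono: "mono M"
        unfolding M_def mono_def
        by (intro allI impI finite_measure.finite_measure_mono[OF fm])
           (auto simp: \<nu>_def dmeas_sets)
      have rho: "\<exists>\<rho>>0. 2*\<rho> \<le> a \<and> (\<forall>r>\<rho>. \<rho> powr t \<le> M r)" if a0: "0 < a" for a
      proof -
        obtain k :: nat where k: "(1/2::real)^k < a/2"
          using real_arch_pow_inv[of "a/2" "1/2::real"] a0 by auto
        obtain j where j: "dist x (Y k j) \<le> R k j" using YR[of k] x by blast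
        have R0: "0 < R k j" and Rk: "R k j \<le> (1/2)^k" using YR[of k] by auto
        have "\<forall>r>R k j. R k j powr t \<le> M r"
        proof (intro allI impI)
          fix r assume r: "R k j < r"
          define n where "n = prod_encode (k, j)"
          have Wn: "W n = R k j powr t" and Ynn: "Yn n = Y k j" by (simp_all add: n_def W_def Yn_def)
          have inb: "Yn n \<in> ball x r" using j r Ynn by simp
          have "ennreal (W n) \<le> emeasure \<nu> (ball x r)"
            unfolding \<nu>_def by (rule dmeas_lower[of "ball x r" Yn n W, OF _ inb]) simp
          also have "\<dots> = ennreal (measure \<nu> (ball x r))"
            using finite_measure.emeasure_eq_measure[OF fm] by simp
          finally have "W n \<le> measure \<nu> (ball x r)" using W0[of n] by (simp add: ennreal_le_iff)
          thus "R k j powr t \<le> M r" using Wn by (simp add: M_def)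
        qed
        thus ?thesis using R0 Rk k by (intro exI[of _ "R k j"]) auto
      qed
      have "(\<integral>\<^sup>+ r\<in>{0<..1}. ennreal ((M r * r powr (2 - real m)) powr (2 / (real m - 2))) \<partial>lborel) = \<infinity>"
        by (rule wolff_aux[OF m3 _ tm mono rho]) (use t0 in auto)
      thus ?thesis unfolding wolff_def M_def .
    qed
    show ?thesis using fr supp wolffinf unfolding T_def by blast
  qed
qed

end
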